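(* Let $I\subset\mathbb{R}$ be an interval, let $n\in\mathbb{N}$ be odd, and let $f:I\to\mathbb{R}$ be $n$-convex. Then for every $x_1$ in the interior of $I$ there exists a polynomial $p\in\Pi_n$ such that $p(x_1)=f(x_1)$ and $p(x)\le f(x)$ for all $x\in I$.
   Context: $\Pi_n$ denotes the set of real polynomials of degree at most $n$. Divided differences are defined recursively by $[x_1;f]:=f(x_1)$ and $[x_1,\dots,x_{m+1};f]:=\frac{[x_2,\dots,x_{m+1};f]-[x_1,\dots,x_m;f]}{x_{m+1}-x_1}$ for pairwise distinct points. For $n\in\mathbb{N}$, a function $f:I\to\mathbb{R}$ is called $n$-convex if $[x_1,\dots,x_{n+2};f]\ge 0$ for all pairwise distinct $x_1,\dots,x_{n+2}\in I$. *)

theory Defs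
  imports "HOL-Analysis.Analysis" "HOL-Computational_Algebra.Polynomial"
begin

text \<open>Divided difference [x_1,...,x_m; f] of f at the points of the list xs, following
  the recursion [x_1;f] = f(x_1),
  [x_1,...,x_{m+1};f] = ([x_2,...,x_{m+1};f] - [x_1,...,x_m;f]) / (x_{m+1} - x_1).
  (The value on the empty list is irrelevant and set to 0.)\<close>
function divdiff :: "real list \<Rightarrow> (real \<Rightarrow> real) \<Rightarrow> real" where
  "divdiff [] f = 0"
| "divdiff [x] f = f x"
| "divdiff (x # y # zs) f =
     (divdiff (y # zs) f - divdiff (butlast (x # y # zs)) f) / (last (y # zs) - x)"
  by pat_completeness auto
termination
  by (relation "Wellfounded.measure (\<lambda>(xs, f). length xs)") auto

definition n_convex :: "nat \<Rightarrow> real set \<Rightarrow> (real \<Rightarrow> real) \<Rightarrow> bool" where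
  "n_convex n I f \<longleftrightarrow>
     (\<forall>xs. length xs = n + 2 \<and> distinct xs \<and> set xs \<subseteq> I \<longrightarrow> divdiff xs f \<ge> 0)"

end

theory Submission
  imports Defs
begin


definition dd :: "real set \<Rightarrow> (real \<Rightarrow> real) \<Rightarrow> real" where
  "dd S f = (\<Sum>x\<in>S. f x / (\<Prod>y\<in>S-{x}. x - y))"

lemma dd_single: "dd {x} f = f x" by (simp add: dd_def)

lemma dd_cong: "(\<And>x. x \<in> S \<Longrightarrow> f x = g x) \<Longrightarrow> dd S f = dd S g"
  unfolding dd_def by (rule sum.cong) auto

lemma prod_nz: "finite S \<Longrightarrow> (\<Prod>y\<in>S-{x}. x - y) \<noteq> (0::real)"
  by (auto simp: prod_zero_iff)

lemma prod_remove_fact: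
  assumes "finite S" "w \<in> S" "w \<noteq> x"
  shows "(\<Prod>y\<in>S-{x}. x - y) = (x - w) * (\<Prod>y\<in>S-{w}-{x}. x - y)"
proof -
  have e: "S - {x} = insert w (S - {w} - {x})" using assms by auto
  show ?thesis by (subst e, subst prod.insert) (use assms in auto)
qed

lemma alg3:
  fixes P Bu Bv x u v f :: real
  assumes "P = (x - u) * Bu" "P = (x - v) * Bv" "P \<noteq> 0"
  shows "f / Bu - f / Bv = (v - u) * (f / P)"
proof -
  have "Bu \<noteq> 0" "Bv \<noteq> 0" "x - u \<noteq> 0" "x - v \<noteq> 0" using assms by auto
  have 1: "f / Bu = (x - u) * f / P" by (subst assms(1)) (use \<open>x - u \<noteq> 0\<close> in simp)
  have 2: "f / Bv = (x - v) * f / P" by (subst assms(2)) (use \<open>x - v \<noteq> 0\<close> in simp)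
  show ?thesis unfolding 1 2 using assms(3) by (simp add: field_simps)
qed

lemma dd_remove:
  assumes "finite S" "u \<in> S"
  shows "dd (S - {u}) f = (\<Sum>x\<in>S. if x = u then 0 else f x / (\<Prod>y\<in>S-{u}-{x}. x - y))"
proof -
  have "(\<Sum>x\<in>S. if x = u then 0 else f x / (\<Prod>y\<in>S-{u}-{x}. x - y))
     = (\<Sum>x\<in>S-{u}. if x = u then 0 else f x / (\<Prod>y\<in>S-{u}-{x}. x - y))"
    using assms by (subst sum.remove[OF assms]) simp
  also have "\<dots> = dd (S - {u}) f" unfolding dd_def by (rule sum.cong) auto
  finally show ?thesis by simp
qed

lemma dd_rec:
  assumes fin: "finite S" and u: "u \<in> S" and v: "v \<in> S" and uv: "u \<noteq> v"
  shows "dd S f = (dd (S - {u}) f - dd (S - {v}) f) / (v - u)"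
proof -
  have "dd (S - {u}) f - dd (S - {v}) f = (v - u) * dd S f"
  proof -
    have "dd (S - {u}) f - dd (S - {v}) f =
      (\<Sum>x\<in>S. (if x = u then 0 else f x / (\<Prod>y\<in>S-{u}-{x}. x - y))
             - (if x = v then 0 else f x / (\<Prod>y\<in>S-{v}-{x}. x - y)))"
      using fin u v by (simp add: dd_remove sum_subtractf)
    also have "\<dots> = (\<Sum>x\<in>S. (v - u) * (f x / (\<Prod>y\<in>S-{x}. x - y)))"
    proof (rule sum.cong[OF refl])
      fix x assume x: "x \<in> S"
      have A: "(\<Prod>y\<in>S-{x}. x - y) \<noteq> 0" using prod_nz fin by blast
      show "(if x = u then 0 else f x / (\<Prod>y\<in>S-{u}-{x}. x - y))
             - (if x = v then 0 else f x / (\<Prod>y\<in>S-{v}-{x}. x - y))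
           = (v - u) * (f x / (\<Prod>y\<in>S-{x}. x - y))"
      proof (cases "x = u")
        case True
        have e: "(\<Prod>y\<in>S-{x}. x - y) = (x - v) * (\<Prod>y\<in>S-{v}-{x}. x - y)"
          using prod_remove_fact[OF fin v] True uv by auto
        have n: "(\<Prod>y\<in>S-{v}-{x}. x - y) \<noteq> 0" using A e by auto
        have h: "(v - u) * (f x / ((x - v) * B)) = 0 - f x / B" if "B \<noteq> 0" for B
          using that True uv by (simp add: field_simps)
        show ?thesis using True uv h[OF n] e by simp
      next
        case False
        note xu = False
        show ?thesis
        proof (cases "x = v")
          case True
          have e: "(\<Prod>y\<in>S-{x}. x - y) = (x - u) * (\<Prod>y\<in>S-{u}-{x}. x - y)"
            using prod_remove_fact[OF fin u] True uv by auto
          have n: "(\<Prod>y\<in>S-{u}-{x}. x - y) \<noteq> 0" using A e by auto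
          have h: "(v - u) * (f x / ((x - u) * B)) = f x / B - 0" if "B \<noteq> 0" for B
            using that True uv by (simp add: field_simps)
          show ?thesis using True xu h[OF n] e by simp
        next
          case False
          have e1: "(\<Prod>y\<in>S-{x}. x - y) = (x - u) * (\<Prod>y\<in>S-{u}-{x}. x - y)"
            using prod_remove_fact[OF fin u] xu by auto
          have e2: "(\<Prod>y\<in>S-{x}. x - y) = (x - v) * (\<Prod>y\<in>S-{v}-{x}. x - y)"
            using prod_remove_fact[OF fin v] False by auto
          show ?thesis using alg3[OF e1 e2 A] xu False by simp
        qed
      qed
    qed
    also have "\<dots> = (v - u) * dd S f" by (simp add: dd_def sum_distrib_left)
    finally show ?thesis .
  qed
  then show ?thesis using uv by (simp add: field_simps)
qed

lemma set_butlast_distinct: "distinct xs \<Longrightarrow> xs \<noteq> [] \<Longrightarrow> set (butlast xs) = set xs - {last xs}"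
proof -
  assume d: "distinct xs" and ne: "xs \<noteq> []"
  have e: "xs = butlast xs @ [last xs]" using ne by simp
  have "distinct (butlast xs @ [last xs])" using d by (simp only: append_butlast_last_id[OF ne])
  then have "last xs \<notin> set (butlast xs)" by simp
  moreover have "set xs = insert (last xs) (set (butlast xs))" by (subst e) auto
  ultimately show ?thesis by auto
qed

lemma divdiff_dd: "distinct xs \<Longrightarrow> xs \<noteq> [] \<Longrightarrow> divdiff xs f = dd (set xs) f"
proof (induction xs f rule: divdiff.induct)
  case (1 f) then show ?case by simp
next
  case (2 x f) then show ?case by (simp add: dd_single)
next
  case (3 x y zs f)
  let ?S = "set (x # y # zs)"
  let ?l = "last (y # zs)"
  have IH1: "divdiff (y # zs) f = dd (set (y # zs)) f"
    by (rule "3.IH"(1)) (use "3.prems" in auto)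
  have IH2: "divdiff (butlast (x # y # zs)) f = dd (set (butlast (x # y # zs))) f"
    by (rule "3.IH"(2)) (use "3.prems" distinct_butlast[of "x#y#zs"] in auto)
  have s1: "set (y # zs) = ?S - {x}" using "3.prems" by auto
  have s2: "set (butlast (x # y # zs)) = ?S - {?l}"
    using set_butlast_distinct[OF "3.prems"(1)] by simp
  have lx: "?l \<noteq> x" using "3.prems" last_in_set[of "y#zs"] by auto
  have l: "?l \<in> ?S" using last_in_set[of "y#zs"] by auto
  have "divdiff (x # y # zs) f = (divdiff (y # zs) f - divdiff (butlast (x # y # zs)) f) / (?l - x)"
    by simp
  also have "\<dots> = (dd (?S - {x}) f - dd (?S - {?l}) f) / (?l - x)"
    by (simp only: IH1 IH2 s1 s2)
  also have "\<dots> = dd ?S f" using dd_rec[of ?S x ?l f] lx l by auto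
  finally show ?case .
qed



definition cv :: "nat \<Rightarrow> real set \<Rightarrow> (real \<Rightarrow> real) \<Rightarrow> bool" where
  "cv m D h \<longleftrightarrow> (\<forall>S. finite S \<and> card S = Suc (Suc m) \<and> S \<subseteq> D \<longrightarrow> 0 \<le> dd S h)"

lemma n_convex_cv: "n_convex n I f \<Longrightarrow> cv n I f"
  unfolding cv_def n_convex_def
proof (intro allI impI)
  fix S assume a: "\<forall>xs. length xs = n + 2 \<and> distinct xs \<and> set xs \<subseteq> I \<longrightarrow> 0 \<le> divdiff xs f"
    and S: "finite S \<and> card S = Suc (Suc n) \<and> S \<subseteq> I"
  let ?xs = "sorted_list_of_set S"
  have l: "length ?xs = n + 2" using S by simp
  have d: "distinct ?xs" by simp
  have s: "set ?xs = S" using S by simp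
  have ne: "?xs \<noteq> []" using l by (cases ?xs) auto
  have "0 \<le> divdiff ?xs f" using a l d s S by auto
  then show "0 \<le> dd S f" using divdiff_dd[OF d ne] s by simp
qed

lemma dd_pair: "c \<noteq> y \<Longrightarrow> dd {c, y} g = g c / (c - y) + g y / (y - c)"
  by (simp add: dd_def insert_Diff_if)

lemma dd_div:
  assumes "finite S" "S \<noteq> {}" "c \<notin> S"
  shows "dd S (\<lambda>x. (g x - g c) / (x - c)) = dd (insert c S) g"
  using assms
proof (induction "card S" arbitrary: S rule: less_induct)
  case less
  show ?case
  proof (cases "card S = 1")
    case True
    then obtain y where S: "S = {y}" by (auto simp: card_Suc_eq)
    have cy: "c \<noteq> y" using less.prems S by auto
    have "dd (insert c S) g = g c / (c - y) + g y / (y - c)" using S dd_pair[OF cy] by simp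
    also have "\<dots> = (g y - g c) / (y - c)"
    proof -
      have "g c / (c - y) = - (g c / (y - c))" by (metis minus_diff_eq minus_divide_right)
      then show ?thesis by (simp add: diff_divide_distrib)
    qed
    finally show ?thesis using S by (simp add: dd_single)
  next
    case False
    then have "card S \<ge> 2" using less.prems by (metis One_nat_def Suc_1 Suc_leI card_gt_0_iff le_antisym not_less_eq_eq)
    note c2 = this
    have fin: "finite S" using less.prems by simp
    obtain u where u: "u \<in> S" using less.prems by blast
    have "card (S - {u}) \<noteq> 0" using c2 u fin by (simp add: card_Diff_singleton)
    then obtain v where v: "v \<in> S - {u}" by (metis all_not_in_conv card.empty)
    have uv: "u \<in> S" "v \<in> S" "u \<noteq> v" using u v by auto
    have cu: "card (S - {u}) < card S" "card (S - {v}) < card S"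
      using card_Diff1_less[OF fin uv(1)] card_Diff1_less[OF fin uv(2)] by auto
    have neu: "S - {u} \<noteq> {}" using uv by auto
    have nev: "S - {v} \<noteq> {}" using uv by auto
    have IHu: "dd (S - {u}) (\<lambda>x. (g x - g c) / (x - c)) = dd (insert c (S - {u})) g"
      using less.hyps[OF cu(1)] fin neu less.prems by auto
    have IHv: "dd (S - {v}) (\<lambda>x. (g x - g c) / (x - c)) = dd (insert c (S - {v})) g"
      using less.hyps[OF cu(2)] fin nev less.prems by auto
    have e1: "insert c S - {u} = insert c (S - {u})" using uv less.prems by auto
    have e2: "insert c S - {v} = insert c (S - {v})" using uv less.prems by auto
    have "dd S (\<lambda>x. (g x - g c) / (x - c)) =
      (dd (S - {u}) (\<lambda>x. (g x - g c) / (x - c)) - dd (S - {v}) (\<lambda>x. (g x - g c) / (x - c))) / (v - u)"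
      by (rule dd_rec[OF fin uv])
    also have "\<dots> = (dd (insert c S - {u}) g - dd (insert c S - {v}) g) / (v - u)"
      unfolding IHu IHv e1 e2 ..
    also have "\<dots> = dd (insert c S) g"
      by (rule dd_rec[symmetric]) (use fin uv in auto)
    finally show ?thesis .
  qed
qed

definition om :: "real \<Rightarrow> real set \<Rightarrow> real" where
  "om c T = (\<Prod>s\<in>T. c - s)"

definition phi :: "(real \<Rightarrow> real) \<Rightarrow> real \<Rightarrow> real set \<Rightarrow> real" where
  "phi h c T = - om c T * dd (insert c T) (h(c := 0))"

lemma om_nz: "finite T \<Longrightarrow> c \<notin> T \<Longrightarrow> om c T \<noteq> 0"
  unfolding om_def by (auto simp: prod_zero_iff)

lemma om_insert: "finite T \<Longrightarrow> z \<notin> T \<Longrightarrow> om c (insert z T) = (c - z) * om c T"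
  unfolding om_def by simp

lemma dd_upd:
  assumes "finite T" "c \<notin> T"
  shows "dd (insert c T) (h(c := a)) = dd (insert c T) (h(c := 0)) + a / om c T"
proof -
  have e: "insert c T - {c} = T" using assms by auto
  have "dd (insert c T) (h(c := a)) = a / om c T + (\<Sum>x\<in>T. (h(c := a)) x / (\<Prod>y\<in>insert c T - {x}. x - y))"
    unfolding dd_def using assms by (simp add: e om_def)
  moreover have "dd (insert c T) (h(c := 0)) = 0 / om c T + (\<Sum>x\<in>T. (h(c := 0)) x / (\<Prod>y\<in>insert c T - {x}. x - y))"
    unfolding dd_def using assms by (simp add: e om_def)
  moreover have "(\<Sum>x\<in>T. (h(c := a)) x / (\<Prod>y\<in>insert c T - {x}. x - y)) = (\<Sum>x\<in>T. (h(c := 0)) x / (\<Prod>y\<in>insert c T - {x}. x - y))"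
    by (rule sum.cong) (use assms in auto)
  ultimately show ?thesis by simp
qed

lemma dd_phi:
  assumes "finite T" "c \<notin> T"
  shows "dd (insert c T) (h(c := a)) = (a - phi h c T) / om c T"
  using dd_upd[OF assms, of h a] om_nz[OF assms] unfolding phi_def by (simp add: field_simps)

lemma alg_swap:
  fixes A B p q w :: real
  assumes "p \<noteq> 0" "q \<noteq> 0" "w \<noteq> 0" "(0 - A / (p * w)) / q = (B / (- q)) / (- p)"
  shows "A = w * (- B)"
proof -
  have 2: "(B / (- q)) / (- p) = B / (q * p)" by simp
  have 3: "(0 - A / (p * w)) / q = - A / (p * w * q)" by simp
  have 4: "- A / (p * w * q) = B / (q * p)" using assms(4) 2 3 by simp
  have nz: "p * w * q \<noteq> 0" using assms by simp
  have "- A = (- A / (p * w * q)) * (p * w * q)" using nz by simp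
  also have "\<dots> = B / (q * p) * (p * w * q)" using 4 by simp
  finally have "- A = B / (q * p) * (p * w * q)" .
  also have "\<dots> = B * w" using assms by (simp add: field_simps)
  finally show ?thesis by (simp add: algebra_simps)
qed

lemma swap_phi:
  assumes W: "finite W" "c \<notin> W" "y \<notin> W" "z \<notin> W" and d: "y \<noteq> c" "z \<noteq> c" "y \<noteq> z"
  shows "phi h c (insert y W) - phi h c (insert z W) = om c W * (dd (insert y W) h - dd (insert z W) h)"
proof -
  define a where "a = phi h c (insert y W)"
  define H where "H = h(c := a)"
  define X where "X = insert c (insert y (insert z W))"
  have finX: "finite X" using W by (simp add: X_def)
  have cyW: "c \<notin> insert y W" "c \<notin> insert z W" using W d by auto
  have e1: "dd (insert c (insert y W)) H = 0"
    unfolding H_def using dd_phi[OF _ cyW(1), of h a] W by (simp add: a_def)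
  have e2: "dd (insert c (insert z W)) H = (a - phi h c (insert z W)) / om c (insert z W)"
    unfolding H_def using dd_phi[OF _ cyW(2), of h a] W by simp
  have oz: "om c (insert z W) = (c - z) * om c W" using om_insert W by simp
  have onz: "om c W \<noteq> 0" using om_nz W by simp
  have Xz: "X - {z} = insert c (insert y W)" using W d by (auto simp: X_def)
  have Xy: "X - {y} = insert c (insert z W)" using W d by (auto simp: X_def)
  have Xc: "X - {c} = insert y (insert z W)" using W d by (auto simp: X_def)
  have r1: "dd X H = (dd (X - {z}) H - dd (X - {y}) H) / (y - z)"
    by (rule dd_rec) (use finX d in \<open>auto simp: X_def\<close>)
  have r2: "dd X H = (dd (X - {c}) H - dd (X - {z}) H) / (z - c)"
    by (rule dd_rec) (use finX d in \<open>auto simp: X_def\<close>)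
  have hc: "dd (insert y (insert z W)) H = dd (insert y (insert z W)) h"
    by (rule dd_cong) (use W d in \<open>auto simp: H_def\<close>)
  have r3: "dd (insert y (insert z W)) h = (dd (insert z W) h - dd (insert y W) h) / (z - y)"
  proof -
    have "dd (insert y (insert z W)) h = (dd (insert y (insert z W) - {y}) h - dd (insert y (insert z W) - {z}) h) / (z - y)"
      by (rule dd_rec) (use W d in auto)
    moreover have "insert y (insert z W) - {y} = insert z W" "insert y (insert z W) - {z} = insert y W"
      using W d by auto
    ultimately show ?thesis by simp
  qed
  define Dy where "Dy = dd (insert y W) h"
  define Dz where "Dz = dd (insert z W) h"
  define pz where "pz = phi h c (insert z W)"
  define w where "w = om c W"
  have eq: "(0 - (a - pz) / ((c - z) * w)) / (y - z) = ((Dz - Dy) / (z - y)) / (z - c)"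
    using r1 r2 unfolding Xz Xy Xc e1 e2 oz hc r3 Dy_def Dz_def pz_def w_def by simp
  have "a - pz = w * (Dy - Dz)"
  proof -
    have "z - y = - (y - z)" "z - c = - (c - z)" by simp_all
    then have eq2: "(0 - (a - pz) / ((c - z) * w)) / (y - z) = ((Dz - Dy) / (- (y - z))) / (- (c - z))"
      using eq by simp
    show ?thesis using alg_swap[OF _ _ _ eq2] d onz w_def by simp

  qed
  then show ?thesis unfolding a_def pz_def w_def Dy_def Dz_def .
qed



definition okset :: "real set \<Rightarrow> real \<Rightarrow> nat \<Rightarrow> real set \<Rightarrow> bool" where
  "okset J c m T \<longleftrightarrow> finite T \<and> card T = Suc m \<and> T \<subseteq> J - {c}"

lemma exists_card_in:
  fixes a b :: real
  assumes "a < b" shows "\<exists>T. finite T \<and> card T = k \<and> T \<subseteq> {a<..<b}"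
proof -
  have "infinite {a<..<b}" using assms by simp
  then obtain T where "T \<subseteq> {a<..<b}" "finite T" "card T = k"
    using infinite_arbitrarily_large by blast
  then show ?thesis by blast
qed

lemma exists_fresh:
  fixes a b :: real
  assumes "a < b" "finite T" shows "\<exists>z. z \<in> {a<..<b} \<and> z \<notin> T"
proof -
  have "infinite {a<..<b}" using assms by simp
  then have "infinite ({a<..<b} - T)" using assms(2) by (rule Diff_infinite_finite[rotated])
  then obtain z where "z \<in> {a<..<b} - T" using infinite_imp_nonempty by blast
  then show ?thesis by blast
qed

lemma card_diff_sym: "finite A \<Longrightarrow> finite B \<Longrightarrow> card A = card B \<Longrightarrow> card (A - B) = card (B - A)"
  by (metis card_Diff_subset_Int finite_Int Int_commute)

context
  fixes J :: "real set" and c \<delta> :: real and h :: "real \<Rightarrow> real" and m :: nat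
  assumes dpos: "\<delta> > 0" and sub: "{c - 2*\<delta>..c + 2*\<delta>} \<subseteq> J" and cvx: "cv m (J - {c}) h"
begin

lemma mono_step:
  assumes o1: "okset J c m (insert y W)" and o2: "okset J c m (insert z W)"
    and yW: "y \<notin> W" and zW: "z \<notin> W" and yz: "y < z"
  shows "dd (insert y W) h \<le> dd (insert z W) h"
proof -
  let ?X = "insert y (insert z W)"
  have fin: "finite W" using o1 unfolding okset_def by auto
  have cW: "card W = m" using o1 fin yW unfolding okset_def by auto
  have card: "card ?X = Suc (Suc m)" using fin yW zW yz cW by auto
  have sb: "?X \<subseteq> J - {c}" using o1 o2 unfolding okset_def by auto
  have "0 \<le> dd ?X h" using cvx fin card sb unfolding cv_def by auto
  moreover have "dd ?X h = (dd (?X - {y}) h - dd (?X - {z}) h) / (z - y)"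
    by (rule dd_rec) (use fin yz in auto)
  moreover have "?X - {y} = insert z W" "?X - {z} = insert y W" using yW zW yz by auto
  ultimately have "0 \<le> (dd (insert z W) h - dd (insert y W) h) / (z - y)" by simp
  then show ?thesis using yz by (simp add: zero_le_divide_iff)
qed

lemma mono_chain:
  "okset J c m A \<Longrightarrow> okset J c m B \<Longrightarrow> (\<forall>a\<in>A-B. \<forall>b\<in>B-A. a < b) \<Longrightarrow> dd A h \<le> dd B h"
proof (induction "card (A - B)" arbitrary: A rule: less_induct)
  case less
  have fA: "finite A" and fB: "finite B" and cA: "card A = Suc m" and cB: "card B = Suc m"
    using less.prems unfolding okset_def by auto
  show ?case
  proof (cases "A - B = {}")
    case True
    then have "A \<subseteq> B" by auto
    then have "A = B" using card_subset_eq[OF fB] cA cB by auto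
    then show ?thesis by simp
  next
    case False
    then obtain a where a: "a \<in> A - B" by blast
    have "card (B - A) = card (A - B)" using card_diff_sym[OF fA fB] cA cB by simp
    moreover have "card (A - B) \<noteq> 0" using False fA by simp
    ultimately have "card (B - A) \<noteq> 0" by simp
    then have "B - A \<noteq> {}" by (metis card.empty)
    then obtain b where b: "b \<in> B - A" by blast
    define A' where "A' = insert b (A - {a})"
    have bA: "b \<notin> A - {a}" using b by auto
    have okA': "okset J c m A'"
      using less.prems(1,2) a b fA bA unfolding okset_def A'_def by (auto simp: card_Diff_singleton)
    have eq: "A' - B = (A - B) - {a}" using a b by (auto simp: A'_def)
    have lt: "card (A' - B) < card (A - B)" unfolding eq using a fA by (intro card_Diff1_less) auto
    have s1: "A' - B \<subseteq> A - B" using eq by auto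
    have s2: "B - A' \<subseteq> B - A" using a by (auto simp: A'_def)
    have inv: "\<forall>x\<in>A'-B. \<forall>y\<in>B-A'. x < y" using less.prems(3) s1 s2 by blast
    have "dd A h \<le> dd A' h"
    proof -
      have e: "insert a (A - {a}) = A" using a by auto
      show ?thesis using mono_step[of a "A - {a}" b] less.prems(1) okA' a b less.prems(3) e
        unfolding A'_def by auto
    qed
    also have "dd A' h \<le> dd B h" using less.hyps[OF lt okA' less.prems(2) inv] by simp
    finally show ?thesis .
  qed
qed

lemma bounds: "\<exists>L U. L \<le> U \<and> (\<forall>T. okset J c m T \<and> T \<subseteq> {c - \<delta><..<c + \<delta>} \<longrightarrow> L \<le> dd T h \<and> dd T h \<le> U)"
proof -
  obtain Ls where Ls: "finite Ls" "card Ls = Suc m" "Ls \<subseteq> {c - 2*\<delta><..<c - \<delta>}"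
    using exists_card_in[of "c - 2*\<delta>" "c - \<delta>" "Suc m"] dpos by auto
  obtain Hs where Hs: "finite Hs" "card Hs = Suc m" "Hs \<subseteq> {c + \<delta><..<c + 2*\<delta>}"
    using exists_card_in[of "c + \<delta>" "c + 2*\<delta>" "Suc m"] dpos by auto
  have "Ls \<subseteq> J - {c}"
  proof
    fix x assume "x \<in> Ls"
    then have "c - 2*\<delta> < x" "x < c - \<delta>" using Ls(3) by auto
    then have "x \<in> {c - 2*\<delta>..c + 2*\<delta>}" "x \<noteq> c" using dpos by auto
    then show "x \<in> J - {c}" using sub by auto
  qed
  then have okL: "okset J c m Ls" using Ls unfolding okset_def by simp
  have "Hs \<subseteq> J - {c}"
  proof
    fix x assume "x \<in> Hs"
    then have "c + \<delta> < x" "x < c + 2*\<delta>" using Hs(3) by auto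
    then have "x \<in> {c - 2*\<delta>..c + 2*\<delta>}" "x \<noteq> c" using dpos by auto
    then show "x \<in> J - {c}" using sub by auto
  qed
  then have okH: "okset J c m Hs" using Hs unfolding okset_def by simp
  have lt1: "a < b" if "a \<in> Ls" "b \<in> Hs" for a b
  proof -
    have "a < c - \<delta>" "c + \<delta> < b" using that Ls(3) Hs(3) by auto
    then show ?thesis using dpos by linarith
  qed
  have "dd Ls h \<le> dd Hs h" using mono_chain[OF okL okH] lt1 by blast
  moreover have "\<forall>T. okset J c m T \<and> T \<subseteq> {c - \<delta><..<c + \<delta>} \<longrightarrow> dd Ls h \<le> dd T h \<and> dd T h \<le> dd Hs h"
  proof (intro allI impI conjI)
    fix T assume T: "okset J c m T \<and> T \<subseteq> {c - \<delta><..<c + \<delta>}"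
    have lt2: "a < b" if "a \<in> Ls" "b \<in> T" for a b
    proof -
      have "a < c - \<delta>" "c - \<delta> < b" using that Ls(3) T by auto
      then show ?thesis by linarith
    qed
    have lt3: "a < b" if "a \<in> T" "b \<in> Hs" for a b
    proof -
      have "a < c + \<delta>" "c + \<delta> < b" using that Hs(3) T by auto
      then show ?thesis by linarith
    qed
    show "dd Ls h \<le> dd T h" using mono_chain[OF okL] T lt2 by blast
    show "dd T h \<le> dd Hs h" using mono_chain[OF _ okH] T lt3 by blast
  qed
  ultimately show ?thesis by blast
qed


lemma toward:
  assumes ok: "okset J c m t" and y: "y \<in> t" and zJ: "z \<in> J" and zc: "z \<noteq> c" and zt: "z \<notin> t"
    and pos: "(y < z \<and> z < c) \<or> (c < z \<and> z < y)" and sg: "0 < \<sigma> * om c t"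
  shows "okset J c m (insert z (t - {y})) \<and> 0 < \<sigma> * om c (insert z (t - {y}))
     \<and> \<sigma> * phi h c t \<le> \<sigma> * phi h c (insert z (t - {y}))"
proof -
  define W where "W = t - {y}"
  have fin: "finite t" and ct: "card t = Suc m" and tJ: "t \<subseteq> J - {c}" using ok unfolding okset_def by auto
  have finW: "finite W" using fin by (simp add: W_def)
  have tW: "t = insert y W" using y by (auto simp: W_def)
  have yW: "y \<notin> W" and zW: "z \<notin> W" using zt by (auto simp: W_def)
  have cW: "c \<notin> W" using tJ by (auto simp: W_def)
  have yc: "y \<noteq> c" using tJ y by auto
  have yz: "y \<noteq> z" using pos by auto
  have cardW: "card W = m" using ct y fin by (simp add: W_def card_Diff_singleton)
  have ok2: "okset J c m (insert z W)" using finW zW cardW tJ zJ zc unfolding okset_def W_def by auto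
  have omt: "om c t = (c - y) * om c W" using tW om_insert finW yW by simp
  have omt2: "om c (insert z W) = (c - z) * om c W" using om_insert finW zW by simp
  have sw: "phi h c (insert y W) - phi h c (insert z W) = om c W * (dd (insert y W) h - dd (insert z W) h)"
    using swap_phi[OF finW cW yW zW yc zc yz] .
  have ok1: "okset J c m (insert y W)" using ok tW by simp
  define w where "w = \<sigma> * om c W"
  have key: "0 \<le> w * (dd (insert z W) h - dd (insert y W) h) \<and> 0 < \<sigma> * om c (insert z W)"
  proof (cases "y < z \<and> z < c")
    case True
    have "0 < (c - y) * w" using sg omt unfolding w_def by (simp add: algebra_simps)
    then have wp: "0 < w" using True by (simp add: zero_less_mult_iff)
    have "dd (insert y W) h \<le> dd (insert z W) h" using mono_step[OF ok1 ok2 yW zW] True by simp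
    moreover have "\<sigma> * om c (insert z W) = (c - z) * w" unfolding w_def omt2 by (simp add: algebra_simps)
    ultimately show ?thesis using wp True by simp
  next
    case False
    then have F: "c < z" "z < y" using pos by auto
    have "0 < (c - y) * w" using sg omt unfolding w_def by (simp add: algebra_simps)
    then have wn: "w < 0" using F by (simp add: zero_less_mult_iff)
    have "dd (insert z W) h \<le> dd (insert y W) h" using mono_step[OF ok2 ok1 zW yW] F by simp
    moreover have "\<sigma> * om c (insert z W) = (c - z) * w" unfolding w_def omt2 by (simp add: algebra_simps)
    ultimately show ?thesis using wn F by (simp add: mult_nonpos_nonpos zero_less_mult_iff)
  qed
  have "\<sigma> * phi h c (insert z W) - \<sigma> * phi h c (insert y W) = \<sigma> * (- (phi h c (insert y W) - phi h c (insert z W)))"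
    by (simp add: algebra_simps)
  also have "\<dots> = \<sigma> * (- (om c W * (dd (insert y W) h - dd (insert z W) h)))" by (simp only: sw)
  also have "\<dots> = w * (dd (insert z W) h - dd (insert y W) h)" unfolding w_def by (simp add: algebra_simps)
  finally have "\<sigma> * phi h c (insert z W) - \<sigma> * phi h c (insert y W) = w * (dd (insert z W) h - dd (insert y W) h)" .
  then show ?thesis using key ok2 tW unfolding W_def by simp
qed

lemma cluster:
  assumes "okset J c m t" "0 < \<sigma> * om c t" "0 < \<epsilon>" "\<epsilon> \<le> \<delta>"
  shows "\<exists>t'. okset J c m t' \<and> 0 < \<sigma> * om c t' \<and> t' \<subseteq> {c - \<epsilon><..<c + \<epsilon>} \<and> \<sigma> * phi h c t \<le> \<sigma> * phi h c t'"
  using assms(1,2)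
proof (induction "card (t - {c - \<epsilon><..<c + \<epsilon>})" arbitrary: t rule: less_induct)
  case less
  let ?N = "{c - \<epsilon><..<c + \<epsilon>}"
  have fin: "finite t" and tJ: "t \<subseteq> J - {c}" using less.prems unfolding okset_def by auto
  show ?case
  proof (cases "t - ?N = {}")
    case True
    then show ?thesis using less.prems by blast
  next
    case False
    then obtain y where y: "y \<in> t" "y \<notin> ?N" by blast
    have yc: "y \<noteq> c" using tJ y by auto
    have NJ: "?N \<subseteq> J"
    proof
      fix x assume "x \<in> ?N"
      then have "x \<in> {c - 2*\<delta>..c + 2*\<delta>}" using assms(4) dpos by auto
      then show "x \<in> J" using sub by auto
    qed
    obtain z where z: "z \<in> ?N" "z \<noteq> c" "z \<notin> t" "(y < z \<and> z < c) \<or> (c < z \<and> z < y)"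
    proof (cases "y < c")
      case True
      then have "y \<le> c - \<epsilon>" using y by auto
      obtain z where "z \<in> {c - \<epsilon><..<c}" "z \<notin> t" using exists_fresh[of "c - \<epsilon>" c t] fin assms(3) by auto
      then show ?thesis using that \<open>y \<le> c - \<epsilon>\<close> by auto
    next
      case False
      then have "c + \<epsilon> \<le> y" using y yc by auto
      obtain z where "z \<in> {c<..<c + \<epsilon>}" "z \<notin> t" using exists_fresh[of c "c + \<epsilon>" t] fin assms(3) by auto
      then show ?thesis using that \<open>c + \<epsilon> \<le> y\<close> by auto
    qed
    define t1 where "t1 = insert z (t - {y})"
    have tw: "okset J c m t1 \<and> 0 < \<sigma> * om c t1 \<and> \<sigma> * phi h c t \<le> \<sigma> * phi h c t1"
      unfolding t1_def using toward[OF less.prems(1) y(1) _ z(2) z(3) z(4) less.prems(2)] NJ z(1) by auto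
    have e: "t1 - ?N = (t - ?N) - {y}" using z(1) y by (auto simp: t1_def)
    have lt: "card (t1 - ?N) < card (t - ?N)" unfolding e using fin y by (intro card_Diff1_less) auto
    obtain t' where t': "okset J c m t'" "0 < \<sigma> * om c t'" "t' \<subseteq> ?N" "\<sigma> * phi h c t1 \<le> \<sigma> * phi h c t'"
      using less.hyps[OF lt] tw by blast
    then show ?thesis using tw by (meson order_trans)
  qed
qed

lemma om_bound:
  assumes "finite W" "W \<subseteq> {c - \<epsilon><..<c + \<epsilon>}"
  shows "\<bar>om c W\<bar> \<le> \<epsilon> ^ card W"
proof -
  have "\<bar>om c W\<bar> = (\<Prod>s\<in>W. \<bar>c - s\<bar>)" unfolding om_def by (simp add: abs_prod)
  also have "\<dots> \<le> (\<Prod>s\<in>W. \<epsilon>)"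
  proof (rule prod_mono)
    fix s assume "s \<in> W"
    then have "c - \<epsilon> < s" "s < c + \<epsilon>" using assms(2) by auto
    then show "0 \<le> \<bar>c - s\<bar> \<and> \<bar>c - s\<bar> \<le> \<epsilon>" by auto
  qed
  finally show ?thesis by simp
qed

lemma close:
  assumes bnd: "\<forall>T. okset J c m T \<and> T \<subseteq> {c - \<delta><..<c + \<delta>} \<longrightarrow> L \<le> dd T h \<and> dd T h \<le> U"
    and eps: "0 < \<epsilon>" "\<epsilon> \<le> \<delta>"
  shows "okset J c m A \<Longrightarrow> okset J c m B \<Longrightarrow> A \<subseteq> {c - \<epsilon><..<c + \<epsilon>} \<Longrightarrow> B \<subseteq> {c - \<epsilon><..<c + \<epsilon>}
    \<Longrightarrow> \<bar>phi h c A - phi h c B\<bar> \<le> real (card (A - B)) * (\<epsilon> ^ m * (U - L))"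
proof (induction "card (A - B)" arbitrary: A rule: less_induct)
  case less
  let ?N = "{c - \<epsilon><..<c + \<epsilon>}"
  have fA: "finite A" and fB: "finite B" and cA: "card A = Suc m" and cB: "card B = Suc m"
    and AJ: "A \<subseteq> J - {c}" and BJ: "B \<subseteq> J - {c}"
    using less.prems unfolding okset_def by auto
  have Nd: "?N \<subseteq> {c - \<delta><..<c + \<delta>}" using eps by auto
  show ?case
  proof (cases "A - B = {}")
    case True
    then have "A \<subseteq> B" by auto
    then have "A = B" using card_subset_eq[OF fB] cA cB by auto
    then show ?thesis by simp
  next
    case False
    then obtain a where a: "a \<in> A - B" by blast
    have "card (B - A) = card (A - B)" using card_diff_sym[OF fA fB] cA cB by simp
    moreover have "card (A - B) \<noteq> 0" using False fA by simp
    ultimately have "card (B - A) \<noteq> 0" by simp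
    then have "B - A \<noteq> {}" by (metis card.empty)
    then obtain b where b: "b \<in> B - A" by blast
    define W where "W = A - {a}"
    define A' where "A' = insert b W"
    have finW: "finite W" using fA by (simp add: W_def)
    have bW: "b \<notin> W" using b by (auto simp: W_def)
    have aW: "a \<notin> W" by (simp add: W_def)
    have cW: "c \<notin> W" using AJ by (auto simp: W_def)
    have cardW: "card W = m" using cA a fA by (simp add: W_def card_Diff_singleton)
    have AW: "A = insert a W" using a by (auto simp: W_def)
    have okA': "okset J c m A'"
      using finW bW cardW AJ BJ b unfolding okset_def A'_def W_def by auto
    have A'N: "A' \<subseteq> ?N" using less.prems(3,4) b unfolding A'_def W_def by auto
    have eq: "A' - B = (A - B) - {a}" using a b by (auto simp: A'_def W_def)
    have lt: "card (A' - B) < card (A - B)" unfolding eq using a fA by (intro card_Diff1_less) auto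
    have IH: "\<bar>phi h c A' - phi h c B\<bar> \<le> real (card (A' - B)) * (\<epsilon> ^ m * (U - L))"
      using less.hyps[OF lt okA' less.prems(2) A'N less.prems(4)] by simp
    have ac: "a \<noteq> c" "b \<noteq> c" "a \<noteq> b" using AJ BJ a b by auto
    have sw: "phi h c A - phi h c A' = om c W * (dd A h - dd A' h)"
      using swap_phi[OF finW cW aW bW ac] unfolding AW A'_def .
    have b1: "L \<le> dd A h \<and> dd A h \<le> U" using bnd less.prems(1,3) Nd by blast
    have b2: "L \<le> dd A' h \<and> dd A' h \<le> U" using bnd okA' A'N Nd by blast
    have d1: "\<bar>dd A h - dd A' h\<bar> \<le> U - L" using b1 b2 by linarith
    have o1: "\<bar>om c W\<bar> \<le> \<epsilon> ^ m" using om_bound[OF finW] less.prems(3) cardW unfolding W_def by auto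
    have "\<bar>phi h c A - phi h c A'\<bar> = \<bar>om c W\<bar> * \<bar>dd A h - dd A' h\<bar>" using sw by (simp add: abs_mult)
    also have "\<dots> \<le> \<epsilon> ^ m * (U - L)" using o1 d1 by (intro mult_mono) auto
    finally have s1: "\<bar>phi h c A - phi h c A'\<bar> \<le> \<epsilon> ^ m * (U - L)" .
    have cc: "real (card (A - B)) = real (card (A' - B)) + 1" using lt eq a fA by (simp add: card_Diff_singleton)
    have "\<bar>phi h c A - phi h c B\<bar> \<le> \<bar>phi h c A - phi h c A'\<bar> + \<bar>phi h c A' - phi h c B\<bar>" by linarith
    also have "\<dots> \<le> \<epsilon> ^ m * (U - L) + real (card (A' - B)) * (\<epsilon> ^ m * (U - L))" using s1 IH by linarith
    also have "\<dots> = real (card (A - B)) * (\<epsilon> ^ m * (U - L))" unfolding cc by (simp add: algebra_simps)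
    finally show ?thesis .
  qed
qed

end



context
  fixes J :: "real set" and c \<delta> :: real and h :: "real \<Rightarrow> real" and m :: nat
  assumes dpos: "\<delta> > 0" and sub: "{c - 2*\<delta>..c + 2*\<delta>} \<subseteq> J" and cvx: "cv m (J - {c}) h"
    and mpos: "0 < m"
begin

lemma key:
  assumes t: "okset J c m t" "0 < om c t" and s: "okset J c m s" "om c s < 0"
  shows "phi h c t \<le> phi h c s"
proof -
  obtain L U where LU: "L \<le> U" and bnd: "\<forall>T. okset J c m T \<and> T \<subseteq> {c - \<delta><..<c + \<delta>} \<longrightarrow> L \<le> dd T h \<and> dd T h \<le> U"
    using bounds[OF dpos sub cvx] by blast
  show ?thesis
  proof (rule field_le_epsilon)
    fix e :: real assume e: "0 < e"
    define K where "K = real (Suc m) * (U - L + 1)"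
    have Kpos: "0 < K" using LU by (simp add: K_def)
    define \<epsilon> where "\<epsilon> = min \<delta> (min 1 (e / K))"
    have ep: "0 < \<epsilon>" "\<epsilon> \<le> \<delta>" "\<epsilon> \<le> 1" "\<epsilon> \<le> e / K" using dpos e Kpos by (auto simp: \<epsilon>_def)
    obtain t1 where t1: "okset J c m t1" "0 < 1 * om c t1" "t1 \<subseteq> {c - \<epsilon><..<c + \<epsilon>}" "1 * phi h c t \<le> 1 * phi h c t1"
      using cluster[OF dpos sub cvx, of t 1 \<epsilon>] t ep by auto
    obtain s1 where s1: "okset J c m s1" "0 < (-1) * om c s1" "s1 \<subseteq> {c - \<epsilon><..<c + \<epsilon>}" "(-1) * phi h c s \<le> (-1) * phi h c s1"
      using cluster[OF dpos sub cvx, of s "-1" \<epsilon>] s ep by auto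
    have cl: "\<bar>phi h c t1 - phi h c s1\<bar> \<le> real (card (t1 - s1)) * (\<epsilon> ^ m * (U - L))"
      using close[OF dpos sub cvx bnd ep(1,2) t1(1) s1(1) t1(3) s1(3)] .
    have "card (t1 - s1) \<le> card t1" using t1(1) unfolding okset_def by (intro card_mono) auto
    then have c1: "real (card (t1 - s1)) \<le> real (Suc m)" using t1(1) unfolding okset_def by auto
    have pw: "\<epsilon> ^ m \<le> \<epsilon>" using power_decreasing[of 1 m \<epsilon>] mpos ep by auto
    have "real (card (t1 - s1)) * (\<epsilon> ^ m * (U - L)) \<le> real (Suc m) * (\<epsilon> * (U - L + 1))"
      using c1 pw LU ep by (intro mult_mono) (auto intro: mult_mono)
    also have "\<dots> = \<epsilon> * K" by (simp add: K_def)
    also have "\<dots> \<le> e / K * K" using ep Kpos by (intro mult_right_mono) auto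
    also have "\<dots> = e" using Kpos by simp
    finally have "\<bar>phi h c t1 - phi h c s1\<bar> \<le> e" using cl by linarith
    then show "phi h c t \<le> phi h c s + e" using t1(4) s1(4) by linarith
  qed
qed

lemma ext: "\<exists>a. \<forall>S. finite S \<and> card S = Suc (Suc m) \<and> S \<subseteq> J \<longrightarrow> 0 \<le> dd S (h(c := a))"
proof -
  let ?P = "{t. okset J c m t \<and> 0 < om c t}"
  have lJ: "{c - \<delta><..<c} \<subseteq> J - {c}" using sub dpos by auto
  obtain T0 where T0: "finite T0" "card T0 = Suc m" "T0 \<subseteq> {c - \<delta><..<c}"
    using exists_card_in[of "c - \<delta>" c "Suc m"] dpos by auto
  have okT0: "okset J c m T0" using T0 lJ unfolding okset_def by auto
  have "0 < om c T0" unfolding om_def using T0(3) by (intro prod_pos) auto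
  then have T0P: "T0 \<in> ?P" using okT0 by simp
  obtain W0 where W0: "finite W0" "card W0 = m" "W0 \<subseteq> {c - \<delta><..<c}"
    using exists_card_in[of "c - \<delta>" c m] dpos by auto
  define z0 where "z0 = c + \<delta> / 2"
  have z0W: "z0 \<notin> W0" using W0(3) dpos by (auto simp: z0_def)
  have z0J: "z0 \<in> J - {c}" using sub dpos by (auto simp: z0_def)
  have okS0: "okset J c m (insert z0 W0)" using W0 z0W z0J lJ unfolding okset_def by auto
  have "0 < om c W0" unfolding om_def using W0(3) by (intro prod_pos) auto
  moreover have "om c (insert z0 W0) = (c - z0) * om c W0" using om_insert W0(1) z0W by simp
  ultimately have S0neg: "om c (insert z0 W0) < 0" using dpos by (simp add: z0_def mult_neg_pos)
  define a where "a = Sup (phi h c ` ?P)"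
  have bdd: "bdd_above (phi h c ` ?P)"
    using key okS0 S0neg by (intro bdd_aboveI[of _ "phi h c (insert z0 W0)"]) auto
  have up: "phi h c t \<le> a" if "t \<in> ?P" for t
    unfolding a_def using bdd that by (intro cSup_upper) auto
  have lo: "a \<le> phi h c s" if "okset J c m s" "om c s < 0" for s
    unfolding a_def using T0P key that by (intro cSup_least) auto
  show ?thesis
  proof (intro exI allI impI)
    fix S assume S: "finite S \<and> card S = Suc (Suc m) \<and> S \<subseteq> J"
    show "0 \<le> dd S (h(c := a))"
    proof (cases "c \<in> S")
      case True
      define t where "t = S - {c}"
      have St: "S = insert c t" using True by (auto simp: t_def)
      have ft: "finite t" "c \<notin> t" using S by (auto simp: t_def)
      have okt: "okset J c m t" using S True unfolding okset_def t_def by (auto simp: card_Diff_singleton)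
      have e: "dd S (h(c := a)) = (a - phi h c t) / om c t" unfolding St by (rule dd_phi[OF ft])
      have onz: "om c t \<noteq> 0" using om_nz[OF ft] .
      show ?thesis
      proof (cases "0 < om c t")
        case True
        then have "phi h c t \<le> a" using up okt by simp
        then show ?thesis unfolding e using True by simp
      next
        case False
        then have neg: "om c t < 0" using onz by simp
        then have "a \<le> phi h c t" using lo okt by simp
        then show ?thesis unfolding e using neg by (simp add: divide_nonpos_neg)
      qed
    next
      case False
      have "dd S (h(c := a)) = dd S h" by (rule dd_cong) (use False in auto)
      moreover have "0 \<le> dd S h" using cvx S False unfolding cv_def by auto
      ultimately show ?thesis by simp
    qed
  qed
qed

end



lemma pw_alg: fixes y E :: real shows "y ^ Suc (Suc m) * (y * E) = y^2 * (y ^ Suc m * E)"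
  by (simp add: power2_eq_square algebra_simps)

lemma R:
  fixes J :: "real set" and c \<delta> :: real
  assumes dpos: "\<delta> > 0" and sub: "{c - 2*\<delta>..c + 2*\<delta>} \<subseteq> J"
  shows "cv m (J - {c}) h \<Longrightarrow> \<exists>q :: real poly. degree q \<le> m \<and> (\<forall>x\<in>J - {c}. 0 \<le> (x - c) ^ Suc m * (h x - poly q x))"
proof (induction m arbitrary: h)
  case 0
  have mono: "h y \<le> h z" if "y \<in> J - {c}" "z \<in> J - {c}" "y < z" for y z
  proof -
    have "0 \<le> dd {y, z} h" using "0.prems" that unfolding cv_def by auto
    also have "dd {y, z} h = h y / (y - z) + h z / (z - y)" using dd_pair that by simp
    also have "\<dots> = (h z - h y) / (z - y)"
    proof -
      have "h y / (y - z) = - (h y / (z - y))" by (metis minus_diff_eq minus_divide_right)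
      then show ?thesis by (simp add: diff_divide_distrib)
    qed
    finally show ?thesis using that by (simp add: zero_le_divide_iff)
  qed
  let ?A = "h ` {y \<in> J - {c}. y < c}"
  define a where "a = Sup ?A"
  have cl: "c - \<delta> \<in> J - {c}" "c + \<delta> \<in> J - {c}" using sub dpos by auto
  have ne: "?A \<noteq> {}" using cl dpos by auto
  have bdd: "bdd_above ?A"
    using mono cl dpos by (intro bdd_aboveI[of _ "h (c + \<delta>)"]) force
  show ?case
  proof (intro exI conjI ballI)
    show "degree [:a:] \<le> 0" by simp
    fix x assume x: "x \<in> J - {c}"
    show "0 \<le> (x - c) ^ Suc 0 * (h x - poly [:a:] x)"
    proof (cases "x < c")
      case True
      have "h x \<le> a" unfolding a_def using bdd x True by (intro cSup_upper) auto
      then show ?thesis using True by (simp add: mult_nonpos_nonpos)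
    next
      case False
      then have xc: "c < x" using x by auto
      have "a \<le> h x" unfolding a_def using ne by (rule cSup_least) (use mono x xc in force)
      then show ?thesis using xc by simp
    qed
  qed
next
  case (Suc m)
  obtain a where a: "\<forall>S. finite S \<and> card S = Suc (Suc (Suc m)) \<and> S \<subseteq> J \<longrightarrow> 0 \<le> dd S (h(c := a))"
    using ext[OF dpos sub Suc.prems] by auto
  define H where "H = h(c := a)"
  define g where "g = (\<lambda>x. (H x - H c) / (x - c))"
  have cvg: "cv m (J - {c}) g"
    unfolding cv_def
  proof (intro allI impI)
    fix S assume S: "finite S \<and> card S = Suc (Suc m) \<and> S \<subseteq> J - {c}"
    have cS: "c \<notin> S" and neS: "S \<noteq> {}" using S by auto
    have e: "dd S g = dd (insert c S) H" unfolding g_def using dd_div S cS neS by auto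
    have cJ: "c \<in> J" using sub dpos by auto
    have p: "finite (insert c S) \<and> card (insert c S) = Suc (Suc (Suc m)) \<and> insert c S \<subseteq> J"
      using S cS cJ by auto
    have "0 \<le> dd (insert c S) H" using a p unfolding H_def by blast
    then show "0 \<le> dd S g" using e by simp
  qed
  obtain q' where q': "degree q' \<le> m" "\<forall>x\<in>J - {c}. 0 \<le> (x - c) ^ Suc m * (g x - poly q' x)"
    using Suc.IH[OF cvg] by blast
  define q where "q = [:a:] + [:- c, 1:] * q'"
  have dq: "degree q \<le> Suc m"
  proof -
    have "degree ([:- c, 1:] * q') \<le> degree [:- c, 1:] + degree q'" by (rule degree_mult_le)
    also have "\<dots> \<le> Suc m" using q'(1) by simp
    finally show ?thesis unfolding q_def by (intro degree_add_le) auto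
  qed
  show ?case
  proof (intro exI conjI ballI)
    show "degree q \<le> Suc m" by (rule dq)
    fix x assume x: "x \<in> J - {c}"
    have xc: "x - c \<noteq> 0" using x by auto
    have gx: "g x = (h x - a) / (x - c)" unfolding g_def H_def using x by auto
    have "h x - poly q x = (x - c) * (g x - poly q' x)"
      unfolding q_def gx using xc by (simp add: field_simps)
    then have "(x - c) ^ Suc (Suc m) * (h x - poly q x) = (x - c) ^ Suc (Suc m) * ((x - c) * (g x - poly q' x))"
      by (simp only:)
    also have "\<dots> = (x - c)^2 * ((x - c) ^ Suc m * (g x - poly q' x))"
      using pw_alg[of "x - c" m "g x - poly q' x"] .
    also have "0 \<le> \<dots>" using q'(2) x by simp
    finally show "0 \<le> (x - c) ^ Suc (Suc m) * (h x - poly q x)" by simp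
  qed
qed



theorem corollary1:
  fixes I :: "real set" and n :: nat and f :: "real \<Rightarrow> real" and x1 :: real
  assumes "is_interval I"
    and "odd n"
    and "n_convex n I f"
    and "x1 \<in> interior I"
  shows "\<exists>p :: real poly. degree p \<le> n \<and> poly p x1 = f x1 \<and> (\<forall>x\<in>I. poly p x \<le> f x)"
proof -
  obtain r where r: "r > 0" "ball x1 r \<subseteq> I" using assms(4) by (meson mem_interior)
  define \<delta> where "\<delta> = r / 3"
  have dpos: "\<delta> > 0" using r by (simp add: \<delta>_def)
  have sub: "{x1 - 2*\<delta>..x1 + 2*\<delta>} \<subseteq> I"
  proof
    fix x assume "x \<in> {x1 - 2*\<delta>..x1 + 2*\<delta>}"
    then have "dist x1 x < r" using r by (auto simp: \<delta>_def dist_real_def abs_if)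
    then show "x \<in> I" using r by auto
  qed
  obtain k where k: "n = Suc k" using assms(2) by (cases n) auto
  have evk: "even k" using assms(2) k by simp
  have cvf: "cv n I f" using n_convex_cv[OF assms(3)] .
  define g where "g = (\<lambda>x. (f x - f x1) / (x - x1))"
  have cvg: "cv k (I - {x1}) g"
    unfolding cv_def
  proof (intro allI impI)
    fix S assume S: "finite S \<and> card S = Suc (Suc k) \<and> S \<subseteq> I - {x1}"
    have cS: "x1 \<notin> S" and neS: "S \<noteq> {}" using S by auto
    have e: "dd S g = dd (insert x1 S) f" unfolding g_def using dd_div S cS neS by auto
    have cJ: "x1 \<in> I" using sub dpos by auto
    have p: "finite (insert x1 S) \<and> card (insert x1 S) = Suc (Suc n) \<and> insert x1 S \<subseteq> I"
      using S cS cJ k by auto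
    have "0 \<le> dd (insert x1 S) f" using cvf p unfolding cv_def by blast
    then show "0 \<le> dd S g" using e by simp
  qed
  obtain q where q: "degree q \<le> k" "\<forall>x\<in>I - {x1}. 0 \<le> (x - x1) ^ Suc k * (g x - poly q x)"
    using R[OF dpos sub cvg] by blast
  define p where "p = [:f x1:] + [:- x1, 1:] * q"
  have dp: "degree p \<le> n"
  proof -
    have "degree ([:- x1, 1:] * q) \<le> degree [:- x1, 1:] + degree q" by (rule degree_mult_le)
    also have "\<dots> \<le> n" using q(1) k by simp
    finally show ?thesis unfolding p_def by (intro degree_add_le) auto
  qed
  show ?thesis
  proof (intro exI conjI ballI)
    show "degree p \<le> n" by (rule dp)
    show "poly p x1 = f x1" by (simp add: p_def)
    fix x assume x: "x \<in> I"
    show "poly p x \<le> f x"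
    proof (cases "x = x1")
      case True then show ?thesis by (simp add: p_def)
    next
      case False
      have xc: "x - x1 \<noteq> 0" using False by auto
      have gx: "g x = (f x - f x1) / (x - x1)" unfolding g_def by simp
      have eq: "f x - poly p x = (x - x1) * (g x - poly q x)"
        unfolding p_def gx using xc by (simp add: field_simps)
      have "0 \<le> (x - x1) ^ Suc k * (g x - poly q x)" using q(2) x False by auto
      also have "(x - x1) ^ Suc k * (g x - poly q x) = (x - x1) ^ k * ((x - x1) * (g x - poly q x))"
        by (simp add: mult.assoc)
      finally have h1: "0 \<le> (x - x1) ^ k * ((x - x1) * (g x - poly q x))" .
      have "0 < (x - x1) ^ k" using evk xc by (simp add: zero_less_power_eq)
      then have "0 \<le> (x - x1) * (g x - poly q x)" using h1 by (simp add: zero_le_mult_iff)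
      then show ?thesis using eq by simp
    qed
  qed
qed


end
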